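(* Let $A\subseteq\mathbb{N}$ with $\operatorname{BD}(A)=\alpha>0$, and let $(I_n)$ be a sequence of intervals $I_n=[a_n,b_n]\subseteq\mathbb{N}$ with $|I_n|\to\infty$ and $\lim_{n\to\infty}\frac{|A\cap I_n|}{|I_n|}=\alpha$. Then there is $L\subseteq\mathbb{N}$ such that (i) $\limsup_{n\to\infty}\frac{|L\cap I_n|}{|I_n|}\ge\alpha$, and (ii) for every finite $F\subseteq L$, the set $A\cap\bigcap_{x\in F}(A-x)$ is infinite.
   Context: $\mathbb{N}=\{1,2,3,\dots\}$; $[a,b]=\{c\in\mathbb{N}:a\le c\le b\}$; $A-x=\{a-x: a\in A\}$. The (upper) Banach density of $A\subseteq\mathbb{N}$ is $\operatorname{BD}(A)=\lim_{n\to\infty}\sup_{m\in\mathbb{N}}\frac{|A\cap[m,m+n]|}{n}$. *)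

theory Defs
  imports "HOL-Analysis.Analysis"
begin

text \<open>N = {1,2,...} is represented inside nat by requiring elements to be \<ge> 1.\<close>

definition has_banach_density :: "nat set \<Rightarrow> real \<Rightarrow> bool" where
  "has_banach_density A \<alpha> \<longleftrightarrow>
     ((\<lambda>n::nat. SUP m\<in>{1::nat..}. real (card (A \<inter> {m..m+n})) / real n) \<longlongrightarrow> \<alpha>) sequentially"

definition shift_set :: "nat set \<Rightarrow> nat \<Rightarrow> nat set" where
  "shift_set A x = {y. y \<ge> 1 \<and> y + x \<in> A}"

end

theory Submission
  imports Defs
begin


lemma card_filter_sum: "finite X \<Longrightarrow> card {x\<in>X. P x} = (\<Sum>x\<in>X. if P x then 1 else 0)"
  by (simp add: sum.inter_filter[symmetric])

lemma swap_count:
  fixes A T X :: "nat set"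
  assumes "finite T" "finite X"
  shows "(\<Sum>t\<in>T. card {x\<in>X. t+x\<in>A}) = (\<Sum>x\<in>X. card {t\<in>T. t+x\<in>A})"
  using assms by (simp add: card_filter_sum sum.swap[of _ T X])

lemma shift_count_lower:
  fixes A :: "nat set"
  shows "card (A \<inter> {p..q}) \<le> card {t\<in>{p..q}. t+x\<in>A} + x"
proof -
  have "A \<inter> {p..q} \<subseteq> (\<lambda>t. t+x) ` {t\<in>{p..q}. t+x\<in>A} \<union> {p..<p+x}"
  proof
    fix y assume y: "y \<in> A \<inter> {p..q}"
    show "y \<in> (\<lambda>t. t+x) ` {t\<in>{p..q}. t+x\<in>A} \<union> {p..<p+x}"
    proof (cases "y < p + x")
      case True then show ?thesis using y by auto
    next
      case False
      then have "y - x \<in> {t\<in>{p..q}. t+x\<in>A}" "y = (y - x) + x" using y by auto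
      then show ?thesis by blast
    qed
  qed
  then have "card (A \<inter> {p..q}) \<le> card ((\<lambda>t. t+x) ` {t\<in>{p..q}. t+x\<in>A} \<union> {p..<p+x})"
    by (intro card_mono) auto
  also have "\<dots> \<le> card ((\<lambda>t. t+x) ` {t\<in>{p..q}. t+x\<in>A}) + card {p..<p+x}"
    by (rule card_Un_le)
  also have "\<dots> \<le> card {t\<in>{p..q}. t+x\<in>A} + x"
    using card_image_le[of "{t\<in>{p..q}. t+x\<in>A}" "\<lambda>t. t+x"] by simp
  finally show ?thesis .
qed

lemma window_count:
  fixes A :: "nat set"
  shows "card {x\<in>{p..q}. t+x\<in>A} \<le> card (A \<inter> {t+p..t+q})"
proof -
  have "card {x\<in>{p..q}. t+x\<in>A} = card ((\<lambda>x. t+x) ` {x\<in>{p..q}. t+x\<in>A})"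
    by (rule card_image[symmetric]) (auto simp: inj_on_def)
  also have "\<dots> \<le> card (A \<inter> {t+p..t+q})"
    by (intro card_mono) auto
  finally show ?thesis .
qed


lemma bad_bound:
  fixes A :: "nat set" and p q pn qn :: nat and \<alpha> \<eta> \<delta> :: real
  assumes pq: "pn \<le> qn" "1 \<le> pn"
    and up: "\<forall>s\<ge>1. real (card (A \<inter> {s..s+(qn-pn)})) \<le> (\<alpha>+\<eta>) * real (qn-pn)"
    and eta: "\<eta> \<ge> 0" and alpha: "\<alpha> > 0" and delta: "\<delta> > 0"
    and dens: "real (card (A \<inter> {p..q})) \<ge> (\<alpha>-\<eta>) * real (card {p..q})"
    and small: "real qn \<le> \<eta> * real (card {p..q})"
  shows "real (card {t\<in>{p..q}. real (card {x\<in>{pn..qn}. t+x\<in>A}) < (\<alpha>-\<delta>) * real (card {pn..qn})}) * \<delta>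
          \<le> 3 * \<eta> * real (card {p..q})"
proof -
  define T where "T = {p..q}"
  define ln where "ln = real (card {pn..qn})"
  define f where "f t = card {x\<in>{pn..qn}. t+x\<in>A}" for t
  define B where "B = {t\<in>T. real (f t) < (\<alpha>-\<delta>) * ln}"
  have ln_pos: "ln > 0" using pq unfolding ln_def by simp
  have ln_eq: "ln = real (qn - pn) + 1" using pq unfolding ln_def by simp
  have fup: "real (f t) \<le> (\<alpha>+\<eta>) * ln" for t
  proof -
    have "f t \<le> card (A \<inter> {t+pn..t+qn})" unfolding f_def by (rule window_count)
    also have "{t+pn..t+qn} = {t+pn..(t+pn)+(qn-pn)}" using pq by simp
    finally have "real (f t) \<le> real (card (A \<inter> {t+pn..(t+pn)+(qn-pn)}))" by simp
    also have "\<dots> \<le> (\<alpha>+\<eta>) * real (qn-pn)" using up pq by (metis le_add2 order_trans)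
    also have "\<dots> \<le> (\<alpha>+\<eta>) * ln" using ln_eq alpha eta by (intro mult_left_mono) auto
    finally show ?thesis .
  qed
  have finT: "finite T" unfolding T_def by simp
  have BT: "B \<subseteq> T" unfolding B_def by auto
  have "(\<Sum>t\<in>T. real (f t)) = real (\<Sum>x\<in>{pn..qn}. card {t\<in>T. t+x\<in>A})"
    unfolding f_def using swap_count[of T "{pn..qn}" A] finT by (simp flip: of_nat_sum)
  also have "\<dots> = (\<Sum>x\<in>{pn..qn}. real (card {t\<in>T. t+x\<in>A}))" by simp
  also have "\<dots> \<ge> (\<Sum>x\<in>{pn..qn}. real (card (A \<inter> T)) - real qn)"
  proof (intro sum_mono)
    fix x assume x: "x \<in> {pn..qn}"
    have "card (A \<inter> T) \<le> card {t\<in>T. t+x\<in>A} + x" unfolding T_def by (rule shift_count_lower)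
    then show "real (card (A \<inter> T)) - real qn \<le> real (card {t\<in>T. t+x\<in>A})" using x by simp
  qed
  finally have lower: "ln * (real (card (A \<inter> T)) - real qn) \<le> (\<Sum>t\<in>T. real (f t))"
    unfolding ln_def by simp
  have "(\<Sum>t\<in>T. real (f t)) = (\<Sum>t\<in>B. real (f t)) + (\<Sum>t\<in>T-B. real (f t))"
    using finT BT by (simp add: sum.subset_diff)
  also have "\<dots> \<le> (\<Sum>t\<in>B. (\<alpha>-\<delta>) * ln) + (\<Sum>t\<in>T-B. (\<alpha>+\<eta>) * ln)"
    by (intro add_mono sum_mono) (auto simp: B_def fup less_imp_le)
  also have "\<dots> = real (card B) * ((\<alpha>-\<delta>) * ln) + (real (card T) - real (card B)) * ((\<alpha>+\<eta>) * ln)"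
    using finT BT by (simp add: card_Diff_subset card_mono of_nat_diff finite_subset)
  finally have "ln * (real (card (A \<inter> T)) - real qn)
      \<le> ln * (real (card T) * (\<alpha>+\<eta>) - real (card B) * (\<delta>+\<eta>))"
    using lower by (simp add: algebra_simps)
  then have "real (card (A \<inter> T)) - real qn \<le> real (card T) * (\<alpha>+\<eta>) - real (card B) * (\<delta>+\<eta>)"
    using ln_pos by simp
  then have "real (card B) * (\<delta>+\<eta>) \<le> 3 * \<eta> * real (card T)"
    using dens small unfolding T_def by (simp add: algebra_simps)
  moreover have "real (card B) * \<delta> \<le> real (card B) * (\<delta>+\<eta>)" using eta by (simp add: mult_left_mono)
  ultimately show ?thesis unfolding B_def f_def T_def ln_def by simp
qed


lemma pigeon:
  fixes G :: "'a set" and P :: "'b set"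
  assumes "finite G" "finite P" "P \<noteq> {}" "\<forall>t\<in>G. pat t \<in> P" "real (card G) \<ge> r"
  shows "\<exists>Q\<in>P. real (card {t\<in>G. pat t = Q}) \<ge> r / real (card P)"
proof (rule ccontr)
  assume "\<not> ?thesis"
  then have lt: "\<forall>Q\<in>P. real (card {t\<in>G. pat t = Q}) < r / real (card P)" by auto
  have "G = (\<Union>Q\<in>P. {t\<in>G. pat t = Q})" using assms(4) by auto
  then have "card G \<le> (\<Sum>Q\<in>P. card {t\<in>G. pat t = Q})"
    using card_UN_le[OF assms(2), of "\<lambda>Q. {t\<in>G. pat t = Q}"] by simp
  then have "real (card G) \<le> (\<Sum>Q\<in>P. real (card {t\<in>G. pat t = Q}))"
    by (metis of_nat_le_iff of_nat_sum)
  also have "\<dots> < (\<Sum>Q\<in>P. r / real (card P))"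
    using lt assms(2,3) by (intro sum_strict_mono) auto
  also have "\<dots> = r" using assms(2,3) by simp
  finally show False using assms(5) by simp
qed


lemma bd_upper:
  assumes BD: "has_banach_density A \<alpha>" and eta: "\<eta> > 0"
  shows "\<exists>D. \<forall>d\<ge>D. \<forall>s\<ge>1. real (card (A \<inter> {s..s+d})) \<le> (\<alpha> + \<eta>) * real d"
proof -
  have "\<forall>\<^sub>F d in sequentially. (SUP m\<in>{1::nat..}. real (card (A \<inter> {m..m+d})) / real d) < \<alpha> + \<eta>"
    using BD eta unfolding has_banach_density_def by (intro order_tendstoD(2)) auto
  then obtain D0 where D0: "\<And>d. d \<ge> D0 \<Longrightarrow> (SUP m\<in>{1::nat..}. real (card (A \<inter> {m..m+d})) / real d) < \<alpha> + \<eta>"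
    by (auto simp: eventually_sequentially)
  show ?thesis
  proof (intro exI[of _ "max D0 1"] allI impI)
    fix d s :: nat assume d: "max D0 1 \<le> d" and s: "1 \<le> s"
    have bdd: "bdd_above ((\<lambda>m. real (card (A \<inter> {m..m+d})) / real d) ` {1..})"
    proof (rule bdd_aboveI2)
      fix m
      have "card (A \<inter> {m..m+d}) \<le> card {m..m+d}" by (intro card_mono) auto
      then have "real (card (A \<inter> {m..m+d})) \<le> real (d+1)" by simp
      then show "real (card (A \<inter> {m..m+d})) / real d \<le> real (d+1) / real d"
        by (intro divide_right_mono) auto
    qed
    have "real (card (A \<inter> {s..s+d})) / real d \<le> (SUP m\<in>{1::nat..}. real (card (A \<inter> {m..m+d})) / real d)"
      using s by (intro cSUP_upper bdd) auto
    also have "\<dots> < \<alpha> + \<eta>" using D0 d by simp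
    finally show "real (card (A \<inter> {s..s+d})) \<le> (\<alpha> + \<eta>) * real d"
      using d by (simp add: divide_less_eq)
  qed
qed



lemma freq_finite_choice:
  assumes "finite Qs" "\<exists>\<^sub>F m in F. \<exists>Q\<in>Qs. P m Q"
  shows "\<exists>Q\<in>Qs. \<exists>\<^sub>F m in F. P m Q"
proof (rule ccontr)
  assume nt: "\<not> ?thesis"
  have "\<forall>Q\<in>Qs. \<forall>\<^sub>F m in F. \<not> P m Q"
  proof
    fix Q assume "Q \<in> Qs"
    with nt have "\<not> (\<exists>\<^sub>F m in F. P m Q)" by blast
    then show "\<forall>\<^sub>F m in F. \<not> P m Q" unfolding not_frequently .
  qed
  then have ev: "\<forall>\<^sub>F m in F. \<forall>Q\<in>Qs. \<not> P m Q" by (rule eventually_ball_finite[OF assms(1)])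
  have "\<exists>\<^sub>F m in F. False"
    using frequently_eventually_frequently[OF assms(2) ev] by (rule frequently_elim1) blast
  then show False using frequently_ex by blast
qed

lemma freq_infinite:
  fixes S :: "nat set" and l :: "nat \<Rightarrow> real"
  assumes "\<exists>\<^sub>F m in sequentially. real (card (S \<inter> I m)) \<ge> c * l m"
    and "filterlim l at_top sequentially" and "c > 0"
  shows "infinite S"
proof
  assume fin: "finite S"
  have "\<forall>\<^sub>F m in sequentially. l m > real (card S) / c"
    using assms(2) by (simp add: filterlim_at_top_dense)
  then have "\<forall>\<^sub>F m in sequentially. c * l m > real (card S)"
    by eventually_elim (use assms(3) in \<open>simp add: pos_divide_less_eq mult.commute\<close>)
  from frequently_eventually_frequently[OF assms(1) this]
  obtain m where "real (card (S \<inter> I m)) \<ge> c * l m" "c * l m > real (card S)"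
    by (auto dest: frequently_ex)
  moreover have "card (S \<inter> I m) \<le> card S" using fin by (simp add: card_mono)
  ultimately show False by linarith
qed

lemma limsup_ge:
  fixes g :: "nat \<Rightarrow> real"
  assumes "\<And>k. \<exists>n\<ge>k. g n \<ge> \<alpha> - 1 / real (Suc k)"
  shows "limsup (\<lambda>n. ereal (g n)) \<ge> ereal \<alpha>"
  unfolding limsup_INF_SUP
proof (rule INF_greatest)
  fix N
  show "ereal \<alpha> \<le> Sup ((\<lambda>n. ereal (g n)) ` {N..})"
  proof (rule ereal_le_epsilon2)
    fix e :: real assume e: "0 < e"
    obtain k where k: "1 / real (Suc k) < e" "k \<ge> N"
    proof -
      obtain k0 where "1 / real (Suc k0) < e" using e nat_approx_posE by blast
      moreover have "1 / real (Suc (max k0 N)) \<le> 1 / real (Suc k0)"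
        by (simp add: frac_le)
      ultimately show ?thesis using that[of "max k0 N"] by simp
    qed
    obtain n where n: "n \<ge> k" "g n \<ge> \<alpha> - 1 / real (Suc k)" using assms by blast
    have "ereal (g n) \<le> Sup ((\<lambda>n. ereal (g n)) ` {N..})"
      using n k by (intro Sup_upper) auto
    moreover have "ereal \<alpha> \<le> ereal (g n) + ereal e" using n k by simp
    ultimately show "ereal \<alpha> \<le> Sup ((\<lambda>n. ereal (g n)) ` {N..}) + ereal e"
      by (metis add_right_mono order_trans)
  qed
qed

definition goodS :: "nat set \<Rightarrow> (nat \<Rightarrow> nat) \<Rightarrow> (nat \<Rightarrow> nat) \<Rightarrow> nat set \<Rightarrow> nat \<Rightarrow> real \<Rightarrow> bool" where
  "goodS A a b S M c \<longleftrightarrow> S \<subseteq> A \<and> c > 0 \<and> (\<forall>t\<in>S. \<forall>t'\<in>S. \<forall>x\<le>M. (t+x\<in>A) = (t'+x\<in>A)) \<and>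
     (\<exists>\<^sub>F m in sequentially. real (card (S \<inter> {a m..b m})) \<ge> c * real (card {a m..b m}))"

lemma step:
  fixes A :: "nat set" and \<alpha> :: real and a b :: "nat \<Rightarrow> nat"
  assumes BD: "has_banach_density A \<alpha>"
    and alpha_pos: "\<alpha> > 0"
    and I_pos: "\<And>n. a n \<ge> 1"
    and I_len: "filterlim (\<lambda>n. real (card {a n..b n})) at_top sequentially"
    and I_dens: "((\<lambda>n. real (card (A \<inter> {a n..b n})) / real (card {a n..b n})) \<longlongrightarrow> \<alpha>) sequentially"
    and G: "goodS A a b S M c"
  shows "\<exists>S' M' c' n. goodS A a b S' M' c' \<and> S' \<subseteq> S \<and> M \<le> M' \<and> n \<ge> k \<and> b n \<le> M' \<and> a n \<le> b n \<and>
           (\<forall>t\<in>S'. real (card {x\<in>{a n..b n}. t+x\<in>A}) \<ge> (\<alpha> - 1 / real (Suc k)) * real (card {a n..b n}))"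
proof -
  define \<delta> where "\<delta> = 1 / real (Suc k)"
  have SA: "S \<subseteq> A" and c: "c > 0" and cons: "\<forall>t\<in>S. \<forall>t'\<in>S. \<forall>x\<le>M. (t+x\<in>A) = (t'+x\<in>A)"
    and Sfreq: "\<exists>\<^sub>F m in sequentially. real (card (S \<inter> {a m..b m})) \<ge> c * real (card {a m..b m})"
    using G unfolding goodS_def by (blast, blast, blast, blast)
  have delta: "\<delta> > 0" unfolding \<delta>_def by simp
  define \<eta> where "\<eta> = \<delta> * c / 6"
  have eta: "\<eta> > 0" unfolding \<eta>_def using delta c by simp
  obtain D where D: "\<And>d s. d \<ge> D \<Longrightarrow> s \<ge> 1 \<Longrightarrow> real (card (A \<inter> {s..s+d})) \<le> (\<alpha> + \<eta>) * real d"
    using bd_upper[OF BD eta] by blast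
  have "\<forall>\<^sub>F n in sequentially. real (D+1) \<le> real (card {a n..b n})"
    using I_len by (simp add: filterlim_at_top)
  then obtain N where N: "\<And>n. n \<ge> N \<Longrightarrow> real (D+1) \<le> real (card {a n..b n})"
    by (auto simp: eventually_sequentially)
  define n where "n = max N k"
  have nk: "n \<ge> k" unfolding n_def by simp
  have "D + 1 \<le> card {a n..b n}" using N[of n] unfolding n_def by simp
  then have abn: "a n \<le> b n" "D \<le> b n - a n" by auto
  have up: "\<forall>s\<ge>1. real (card (A \<inter> {s..s+(b n - a n)})) \<le> (\<alpha>+\<eta>) * real (b n - a n)"
    using D abn by blast
  define goodt where "goodt t \<longleftrightarrow> real (card {x\<in>{a n..b n}. t+x\<in>A}) \<ge> (\<alpha> - \<delta>) * real (card {a n..b n})" for t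
  define l where "l m = real (card {a m..b m})" for m
  have ev1: "\<forall>\<^sub>F m in sequentially. l m > 0"
    unfolding l_def using I_len[unfolded filterlim_at_top_dense] by blast
  have ev2: "\<forall>\<^sub>F m in sequentially. l m \<ge> real (b n) / \<eta>"
    unfolding l_def using I_len[unfolded filterlim_at_top] by blast
  have ev3: "\<forall>\<^sub>F m in sequentially. real (card (A \<inter> {a m..b m})) / l m > \<alpha> - \<eta>"
    using I_dens eta unfolding l_def by (intro order_tendstoD(1)) auto
  have evB: "\<forall>\<^sub>F m in sequentially.
      real (card {t\<in>{a m..b m}. \<not> goodt t}) \<le> c / 2 * l m"
    using ev1 ev2 ev3
  proof eventually_elim
    case (elim m)
    have dens: "real (card (A \<inter> {a m..b m})) \<ge> (\<alpha>-\<eta>) * real (card {a m..b m})"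
      using elim unfolding l_def by (simp add: less_divide_eq less_imp_le)
    have small: "real (b n) \<le> \<eta> * real (card {a m..b m})"
      using elim eta unfolding l_def by (simp add: divide_le_eq mult.commute)
    have "real (card {t\<in>{a m..b m}. real (card {x\<in>{a n..b n}. t+x\<in>A}) < (\<alpha>-\<delta>) * real (card {a n..b n})}) * \<delta>
          \<le> 3 * \<eta> * real (card {a m..b m})"
      by (rule bad_bound[OF abn(1) I_pos up less_imp_le[OF eta] alpha_pos delta dens small])
    moreover have "{t\<in>{a m..b m}. \<not> goodt t} = {t\<in>{a m..b m}. real (card {x\<in>{a n..b n}. t+x\<in>A}) < (\<alpha>-\<delta>) * real (card {a n..b n})}"
      unfolding goodt_def by (auto simp del: card_atLeastAtMost)
    ultimately have "real (card {t\<in>{a m..b m}. \<not> goodt t}) * \<delta> \<le> 3 * \<eta> * l m"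
      unfolding l_def by simp
    also have "3 * \<eta> * l m = (c / 2 * l m) * \<delta>" unfolding \<eta>_def by (simp add: field_simps)
    finally show ?case using delta by simp
  qed
  define M' where "M' = max M (b n)"
  define pat where "pat t = {x\<in>{0..M'}. t+x\<in>A}" for t
  define P where "P = Pow {0..M'}"
  have cardP: "real (card P) = 2 ^ (M'+1)" unfolding P_def by (simp add: card_Pow)
  define c' where "c' = c / 2 / 2 ^ (M'+1)"
  have c': "c' > 0" unfolding c'_def using c by simp
  have FR: "\<exists>\<^sub>F m in sequentially. \<exists>Q\<in>P. real (card {t\<in>{t\<in>S \<inter> {a m..b m}. goodt t}. pat t = Q}) \<ge> c' * l m"
    using frequently_eventually_frequently[OF Sfreq evB]
  proof (rule frequently_elim1)
    fix m assume m: "c * real (card {a m..b m}) \<le> real (card (S \<inter> {a m..b m})) \<and>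
        real (card {t\<in>{a m..b m}. \<not> goodt t}) \<le> c / 2 * l m"
    have "S \<inter> {a m..b m} \<subseteq> {t\<in>S \<inter> {a m..b m}. goodt t} \<union> {t\<in>{a m..b m}. \<not> goodt t}" by auto
    then have "card (S \<inter> {a m..b m}) \<le> card ({t\<in>S \<inter> {a m..b m}. goodt t} \<union> {t\<in>{a m..b m}. \<not> goodt t})"
      by (intro card_mono) auto
    also have "\<dots> \<le> card {t\<in>S \<inter> {a m..b m}. goodt t} + card {t\<in>{a m..b m}. \<not> goodt t}"
      by (rule card_Un_le)
    finally have "real (card {t\<in>S \<inter> {a m..b m}. goodt t}) \<ge> c / 2 * l m"
      using m unfolding l_def by linarith
    then have "\<exists>Q\<in>P. real (card {t\<in>{t\<in>S \<inter> {a m..b m}. goodt t}. pat t = Q}) \<ge> (c / 2 * l m) / real (card P)"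
      by (intro pigeon) (auto simp: P_def pat_def)
    then show "\<exists>Q\<in>P. real (card {t\<in>{t\<in>S \<inter> {a m..b m}. goodt t}. pat t = Q}) \<ge> c' * l m"
      unfolding cardP c'_def by (simp add: field_simps)
  qed
  have finP: "finite P" unfolding P_def by simp
  obtain Q where Q: "Q \<in> P"
    and Qfreq: "\<exists>\<^sub>F m in sequentially. real (card {t\<in>{t\<in>S \<inter> {a m..b m}. goodt t}. pat t = Q}) \<ge> c' * l m"
    using freq_finite_choice[OF finP FR] by blast
  define S' where "S' = {t\<in>S. goodt t \<and> pat t = Q}"
  have "goodS A a b S' M' c'"
    unfolding goodS_def
  proof (intro conjI)
    show "S' \<subseteq> A" using SA unfolding S'_def by auto
    show "c' > 0" by (rule c')
    show "\<forall>t\<in>S'. \<forall>t'\<in>S'. \<forall>x\<le>M'. (t+x\<in>A) = (t'+x\<in>A)"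
    proof (intro ballI allI impI)
      fix t t' x assume "t \<in> S'" "t' \<in> S'" "x \<le> M'"
      then have "pat t = pat t'" "x \<in> {0..M'}" unfolding S'_def by auto
      then show "(t+x\<in>A) = (t'+x\<in>A)" unfolding pat_def by blast
    qed
    show "\<exists>\<^sub>F m in sequentially. real (card (S' \<inter> {a m..b m})) \<ge> c' * real (card {a m..b m})"
      using Qfreq
    proof (rule frequently_elim1)
      fix m
      have "{t\<in>{t\<in>S \<inter> {a m..b m}. goodt t}. pat t = Q} = S' \<inter> {a m..b m}" unfolding S'_def by auto
      then show "c' * l m \<le> real (card {t\<in>{t\<in>S \<inter> {a m..b m}. goodt t}. pat t = Q}) \<Longrightarrow>
        c' * real (card {a m..b m}) \<le> real (card (S' \<inter> {a m..b m}))" unfolding l_def by simp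
    qed
  qed
  moreover have "S' \<subseteq> S" "M \<le> M'" "b n \<le> M'" unfolding S'_def M'_def by auto
  moreover have "\<forall>t\<in>S'. real (card {x\<in>{a n..b n}. t+x\<in>A}) \<ge> (\<alpha> - 1 / real (Suc k)) * real (card {a n..b n})"
    unfolding S'_def goodt_def \<delta>_def by auto
  ultimately show ?thesis using nk abn(1) by blast
qed


theorem lemma3p3:
  fixes A :: "nat set" and \<alpha> :: real and a b :: "nat \<Rightarrow> nat"
  assumes A_pos: "A \<subseteq> {1..}"
    and BD: "has_banach_density A \<alpha>"
    and alpha_pos: "\<alpha> > 0"
    and I_pos: "\<And>n. a n \<ge> 1"
    and I_len: "filterlim (\<lambda>n. real (card {a n..b n})) at_top sequentially"
    and I_dens: "((\<lambda>n. real (card (A \<inter> {a n..b n})) / real (card {a n..b n})) \<longlongrightarrow> \<alpha>) sequentially"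
  shows "\<exists>L. L \<subseteq> {1..} \<and>
           limsup (\<lambda>n. ereal (real (card (L \<inter> {a n..b n})) / real (card {a n..b n}))) \<ge> ereal \<alpha> \<and>
           (\<forall>F. finite F \<and> F \<subseteq> L \<longrightarrow> infinite (A \<inter> (\<Inter>x\<in>F. shift_set A x)))"
proof -
  note stp = step[OF BD alpha_pos I_pos I_len I_dens]
  have G0: "goodS A a b A 0 (\<alpha>/2)"
    unfolding goodS_def
  proof (intro conjI)
    show "A \<subseteq> A" by simp
    show "\<alpha>/2 > 0" using alpha_pos by simp
    show "\<forall>t\<in>A. \<forall>t'\<in>A. \<forall>x\<le>0. (t+x\<in>A) = (t'+x\<in>A)" by simp
    have ev1: "\<forall>\<^sub>F m in sequentially. real (card {a m..b m}) > 0"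
      using I_len[unfolded filterlim_at_top_dense] by blast
    have ev2: "\<forall>\<^sub>F m in sequentially. real (card (A \<inter> {a m..b m})) / real (card {a m..b m}) > \<alpha>/2"
      using I_dens alpha_pos by (intro order_tendstoD(1)) auto
    have "\<forall>\<^sub>F m in sequentially. real (card (A \<inter> {a m..b m})) \<ge> \<alpha>/2 * real (card {a m..b m})"
      using ev1 ev2 by eventually_elim (simp add: less_divide_eq less_imp_le)
    then show "\<exists>\<^sub>F m in sequentially. real (card (A \<inter> {a m..b m})) \<ge> \<alpha>/2 * real (card {a m..b m})"
      by (rule eventually_frequently[rotated]) simp
  qed
  define P where "P k x \<longleftrightarrow> (case x of (S, M, c, n) \<Rightarrow> goodS A a b S M c \<and> n \<ge> k \<and> b n \<le> M \<and> a n \<le> b n \<and>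
           (\<forall>t\<in>S. real (card {x\<in>{a n..b n}. t+x\<in>A}) \<ge> (\<alpha> - 1 / real (Suc k)) * real (card {a n..b n})))"
    for k :: nat and x :: "nat set \<times> nat \<times> real \<times> nat"
  define Q where "Q k x y \<longleftrightarrow> fst y \<subseteq> fst x \<and> fst (snd x) \<le> fst (snd y)"
    for k :: nat and x y :: "nat set \<times> nat \<times> real \<times> nat"
  have "\<exists>f. \<forall>k. P k (f k) \<and> Q k (f k) (f (Suc k))"
  proof (rule dependent_nat_choice)
    obtain S' M' c' n where "goodS A a b S' M' c' \<and> S' \<subseteq> A \<and> 0 \<le> M' \<and> n \<ge> 0 \<and> b n \<le> M' \<and> a n \<le> b n \<and>
           (\<forall>t\<in>S'. real (card {x\<in>{a n..b n}. t+x\<in>A}) \<ge> (\<alpha> - 1 / real (Suc 0)) * real (card {a n..b n}))"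
      using stp[OF G0, of 0] by blast
    then show "\<exists>x. P 0 x" unfolding P_def by (intro exI[of _ "(S', M', c', n)"]) (simp del: card_atLeastAtMost)
  next
    fix x k assume Px: "P k x"
    obtain S M c n0 where x: "x = (S, M, c, n0)" by (cases x) auto
    have "goodS A a b S M c" using Px unfolding x P_def by simp
    then obtain S' M' c' n where "goodS A a b S' M' c' \<and> S' \<subseteq> S \<and> M \<le> M' \<and> n \<ge> Suc k \<and> b n \<le> M' \<and> a n \<le> b n \<and>
           (\<forall>t\<in>S'. real (card {x\<in>{a n..b n}. t+x\<in>A}) \<ge> (\<alpha> - 1 / real (Suc (Suc k))) * real (card {a n..b n}))"
      using stp[of S M c "Suc k"] by blast
    then show "\<exists>y. P (Suc k) y \<and> Q k x y" unfolding P_def Q_def x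
      by (intro exI[of _ "(S', M', c', n)"]) (simp del: card_atLeastAtMost)
  qed
  then obtain f where f: "\<And>k. P k (f k) \<and> Q k (f k) (f (Suc k))" by blast
  define Sf where "Sf k = fst (f k)" for k
  define Mf where "Mf k = fst (snd (f k))" for k
  define cf where "cf k = fst (snd (snd (f k)))" for k
  define nf where "nf k = snd (snd (snd (f k)))" for k
  have Pk: "goodS A a b (Sf k) (Mf k) (cf k) \<and> nf k \<ge> k \<and> b (nf k) \<le> Mf k \<and> a (nf k) \<le> b (nf k) \<and>
           (\<forall>t\<in>Sf k. real (card {x\<in>{a (nf k)..b (nf k)}. t+x\<in>A}) \<ge> (\<alpha> - 1 / real (Suc k)) * real (card {a (nf k)..b (nf k)}))"
    for k using f[of k] unfolding P_def Sf_def Mf_def cf_def nf_def by (cases "f k") (simp del: card_atLeastAtMost)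
  have Qk: "Sf (Suc k) \<subseteq> Sf k" "Mf k \<le> Mf (Suc k)" for k
    using f[of k] unfolding Q_def Sf_def Mf_def by auto
  have Santi: "Sf j \<subseteq> Sf i" if "i \<le> j" for i j
    using lift_Suc_antimono_le[of Sf, OF Qk(1) that] .
  have Mmono: "Mf i \<le> Mf j" if "i \<le> j" for i j
    using lift_Suc_mono_le[of Mf, OF Qk(2) that] .
  have SA: "Sf k \<subseteq> A" for k using Pk[of k] unfolding goodS_def by blast
  have cons: "\<forall>t\<in>Sf k. \<forall>t'\<in>Sf k. \<forall>x\<le>Mf k. (t+x\<in>A) = (t'+x\<in>A)" for k
    using Pk[of k] unfolding goodS_def by blast
  have Sinf: "infinite (Sf k)" for k
  proof -
    have "cf k > 0" "\<exists>\<^sub>F m in sequentially. real (card (Sf k \<inter> {a m..b m})) \<ge> cf k * real (card {a m..b m})"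
      using Pk[of k] unfolding goodS_def by blast+
    then show ?thesis
      using freq_infinite[where S="Sf k" and I="\<lambda>m. {a m..b m}" and c="cf k" and l="\<lambda>m. real (card {a m..b m})"] I_len by blast
  qed
  have Sne: "\<exists>t. t \<in> Sf k" for k using Sinf[of k] by (metis ex_in_conv finite.emptyI)
  define L where "L = {x. x \<ge> 1 \<and> (\<exists>k. x \<le> Mf k \<and> (\<forall>t\<in>Sf k. t+x\<in>A))}"
  have mem: "t + x \<in> A" if "x \<in> L" "x \<le> Mf k" "t \<in> Sf k" for x k t
  proof -
    obtain k' where k': "x \<le> Mf k'" "\<forall>t\<in>Sf k'. t+x\<in>A" using \<open>x \<in> L\<close> unfolding L_def by blast
    obtain t0 where t0: "t0 \<in> Sf (max k k')" using Sne by blast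
    then have "t0 \<in> Sf k'" "t0 \<in> Sf k" using Santi[of k' "max k k'"] Santi[of k "max k k'"] by auto
    then show ?thesis using k' cons[of k] that by blast
  qed
  have part1: "limsup (\<lambda>n. ereal (real (card (L \<inter> {a n..b n})) / real (card {a n..b n}))) \<ge> ereal \<alpha>"
  proof (rule limsup_ge)
    fix k
    define n where "n = nf k"
    obtain t where t: "t \<in> Sf k" using Sne by blast
    have sub: "{x\<in>{a n..b n}. t+x\<in>A} \<subseteq> L \<inter> {a n..b n}"
    proof
      fix x assume x: "x \<in> {x\<in>{a n..b n}. t+x\<in>A}"
      have "x \<ge> 1" using x I_pos[of n] by auto
      moreover have "x \<le> Mf k" using x Pk[of k] unfolding n_def by auto
      moreover have "\<forall>t'\<in>Sf k. t'+x\<in>A" using cons[of k] x t \<open>x \<le> Mf k\<close> by blast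
      ultimately show "x \<in> L \<inter> {a n..b n}" using x unfolding L_def by blast
    qed
    have "(\<alpha> - 1 / real (Suc k)) * real (card {a n..b n}) \<le> real (card {x\<in>{a n..b n}. t+x\<in>A})"
      using Pk[of k] t unfolding n_def by blast
    also have "\<dots> \<le> real (card (L \<inter> {a n..b n}))" using sub by (simp add: card_mono)
    finally have le: "(\<alpha> - 1 / real (Suc k)) * real (card {a n..b n}) \<le> real (card (L \<inter> {a n..b n}))" .
    have pos: "real (card {a n..b n}) > 0" using Pk[of k] unfolding n_def by simp
    have "\<alpha> - 1 / real (Suc k) \<le> real (card (L \<inter> {a n..b n})) / real (card {a n..b n})"
      using le pos by (simp add: le_divide_eq)
    moreover have "n \<ge> k" using Pk[of k] unfolding n_def by simp
    ultimately show "\<exists>n\<ge>k. \<alpha> - 1 / real (Suc k) \<le> real (card (L \<inter> {a n..b n})) / real (card {a n..b n})"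
      by blast
  qed
  have part2: "infinite (A \<inter> (\<Inter>x\<in>F. shift_set A x))" if F: "finite F" "F \<subseteq> L" for F
  proof -
    have "\<exists>K. \<forall>x\<in>F. x \<le> Mf K" using F
    proof (induction F rule: finite_induct)
      case empty then show ?case by simp
    next
      case (insert y F)
      then obtain K where K: "\<forall>x\<in>F. x \<le> Mf K" by blast
      obtain K' where K': "y \<le> Mf K'" using insert.prems unfolding L_def by blast
      have "\<forall>x\<in>insert y F. x \<le> Mf (max K K')"
        using K K' Mmono[of K "max K K'"] Mmono[of K' "max K K'"] by fastforce
      then show ?case by blast
    qed
    then obtain K where K: "\<forall>x\<in>F. x \<le> Mf K" by blast
    have "Sf K - {0} \<subseteq> A \<inter> (\<Inter>x\<in>F. shift_set A x)"
    proof
      fix t assume t: "t \<in> Sf K - {0}"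
      have "t \<in> A" using t SA by blast
      moreover have "t \<in> shift_set A x" if "x \<in> F" for x
        using mem[of x K t] that K F t unfolding shift_set_def by auto
      ultimately show "t \<in> A \<inter> (\<Inter>x\<in>F. shift_set A x)" by blast
    qed
    moreover have "infinite (Sf K - {0})" using Sinf[of K] by simp
    ultimately show ?thesis using infinite_super by blast
  qed
  have "L \<subseteq> {1..}" unfolding L_def by auto
  then show ?thesis using part1 part2 by blast
qed

end
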